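(* Suppose Assumption 3 holds and $\alpha>0$ (which holds for almost all data). Let $\ell$ be the exponential loss $\ell(x)=e^{-x}$ or the logistic loss $\ell(x)=\ln(1+e^{-x})$, and let $K=\frac{1+\ln n}{\alpha}$ in the exponential case and $K=\frac{2n}{e\alpha}$ in the logistic case. Then for every $w\in\mathbb{R}^d$ with $\langle w,\bar u\rangle\ge0$ and $\|\Pi_\perp w\|> K$, we have $\langle\Pi_\perp w,\nabla\mathcal{R}(w)\rangle\ge0$.
   Context: Data $(x_i,y_i)_{i=1}^n$ with $x_i\in\mathbb{R}^d$, $\|x_i\|\le 1$, $y_i\in\{-1,+1\}$, $z_i:=y_ix_i$, linearly separable. $\gamma:=\max_{\|u\|=1}\min_i\langle u,z_i\rangle>0$ and $\bar u$ is the unique unit vector attaining it. $S$ is the set of indices $i$ with $\langle\bar u,z_i\rangle=\gamma$ (support vectors). Assumption 3: $\{z_i:i\in S\}$ spans $\mathbb{R}^d$. $\alpha:=\min_{\|\xi\|=1,\ \xi\perp\bar u}\max_{i\in S}\langle\xi,z_i\rangle$. For $w\in\mathbb{R}^d$, $\mathcal{R}(w):=\frac1n\sum_{i=1}^n\ell(\langle w,z_i\rangle)$, so $\nabla\mathcal{R}(w)=\frac1n\sum_i\ell'(\langle w,z_i\rangle)z_i$. $\Pi_\perp$ is the orthogonal projection onto the orthogonal complement of $\mathrm{span}(\bar u)$. *)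

theory Defs
  imports "HOL-Analysis.Analysis"
begin

datatype loss_kind = ExpLoss | LogisticLoss

fun ell :: "loss_kind \<Rightarrow> real \<Rightarrow> real" where
  "ell ExpLoss t = exp (- t)"
| "ell LogisticLoss t = ln (1 + exp (- t))"

fun ell' :: "loss_kind \<Rightarrow> real \<Rightarrow> real" where
  "ell' ExpLoss t = - exp (- t)"
| "ell' LogisticLoss t = - exp (- t) / (1 + exp (- t))"

lemma ell'_is_derivative: "(ell L has_real_derivative ell' L t) (at t)"
proof (cases L)
  case ExpLoss
  have "((\<lambda>t. exp (- t)) has_real_derivative exp (- t) * (- 1)) (at t)"
    by (auto intro!: derivative_eq_intros)
  moreover have "ell ExpLoss = (\<lambda>t. exp (- t))" by (rule ext) simp
  ultimately show ?thesis using ExpLoss by simp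
next
  case LogisticLoss
  have "((\<lambda>t. ln (1 + exp (- t))) has_real_derivative (exp (- t) * (- 1)) / (1 + exp (- t))) (at t)"
    by (auto intro!: derivative_eq_intros simp: add_pos_pos)
  moreover have "ell LogisticLoss = (\<lambda>t. ln (1 + exp (- t)))" by (rule ext) simp
  ultimately show ?thesis using LogisticLoss by simp
qed

definition zvec :: "(nat \<Rightarrow> 'a::real_vector) \<Rightarrow> (nat \<Rightarrow> real) \<Rightarrow> nat \<Rightarrow> 'a" where
  "zvec x y i = y i *\<^sub>R x i"

definition margin :: "nat \<Rightarrow> (nat \<Rightarrow> 'a::real_inner) \<Rightarrow> 'a \<Rightarrow> real" where
  "margin n z u = Min ((\<lambda>i. inner u (z i)) ` {..<n})"

definition risk :: "loss_kind \<Rightarrow> nat \<Rightarrow> (nat \<Rightarrow> 'a::real_inner) \<Rightarrow> 'a \<Rightarrow> real" where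
  "risk L n z w = (1 / real n) * (\<Sum>i<n. ell L (inner w (z i)))"

definition risk_grad :: "loss_kind \<Rightarrow> nat \<Rightarrow> (nat \<Rightarrow> 'a::real_inner) \<Rightarrow> 'a \<Rightarrow> 'a" where
  "risk_grad L n z w = (1 / real n) *\<^sub>R (\<Sum>i<n. ell' L (inner w (z i)) *\<^sub>R z i)"

text \<open>Orthogonal projection onto the orthogonal complement of span(u), u a unit vector.\<close>
definition proj_perp :: "'a::real_inner \<Rightarrow> 'a \<Rightarrow> 'a" where
  "proj_perp u w = w - inner w u *\<^sub>R u"

definition support_set :: "nat \<Rightarrow> (nat \<Rightarrow> 'a::real_inner) \<Rightarrow> 'a \<Rightarrow> real \<Rightarrow> nat set" where
  "support_set n z u g = {i. i < n \<and> inner u (z i) = g}"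

definition alpha_const :: "nat \<Rightarrow> (nat \<Rightarrow> 'a::real_inner) \<Rightarrow> 'a \<Rightarrow> real \<Rightarrow> real" where
  "alpha_const n z u g =
     Inf ((\<lambda>\<xi>. Max ((\<lambda>i. inner \<xi> (z i)) ` support_set n z u g)) ` {\<xi>. norm \<xi> = 1 \<and> inner \<xi> u = 0})"

fun K_const :: "loss_kind \<Rightarrow> nat \<Rightarrow> real \<Rightarrow> real" where
  "K_const ExpLoss n a = (1 + ln (real n)) / a"
| "K_const LogisticLoss n a = 2 * real n / (exp 1 * a)"

end

theory Submission
  imports Defs
begin

lemma pexp_bound: "(p::real) * exp (-p) \<le> exp (-1)"
proof -
  have "p \<le> exp (p - 1)" using exp_ge_add_one_self[of "p-1"] by simp
  hence "p * exp (-p) \<le> exp (p - 1) * exp (-p)" by (simp add: mult_right_mono)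
  also have "\<dots> = exp (-1)" by (simp add: exp_add[symmetric])
  finally show ?thesis .
qed

lemma g_upper: "0 \<le> - ell' L t \<and> - ell' L t \<le> exp (-t)"
  by (cases L) (auto simp: divide_le_eq add_pos_pos)

lemma term_bound:
  assumes "a \<ge> p + C" "C \<ge> 0"
  shows "- ell' L a * p \<le> exp (-C) * exp (-1)"
proof (cases "p \<le> 0")
  case True
  have "0 \<le> - ell' L a" using g_upper by blast
  hence "- ell' L a * p \<le> 0" using True by (rule mult_nonneg_nonpos)
  thus ?thesis by (smt (verit) exp_gt_zero mult_pos_pos)
next
  case False
  have "- ell' L a * p \<le> exp (-a) * p" using g_upper[of L a] False
    by (metis mult_minus_left mult_right_mono not_le order_less_imp_le)
  also have "\<dots> \<le> exp (-C - p) * p" using assms False by (intro mult_right_mono) auto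
  also have "\<dots> = exp (-C) * (p * exp (-p))" by (simp add: exp_diff exp_minus field_simps)
  also have "\<dots> \<le> exp (-C) * exp (-1)" using pexp_bound[of p] by (intro mult_left_mono) auto
  finally show ?thesis .
qed

theorem mainTheorem7:
  fixes n :: nat and x :: "nat \<Rightarrow> 'a::euclidean_space" and y :: "nat \<Rightarrow> real"
    and ubar w :: 'a and \<gamma> :: real and L :: loss_kind
  assumes n_pos: "n > 0"
    and x_bdd: "\<forall>i<n. norm (x i) \<le> 1"
    and y_sign: "\<forall>i<n. y i = 1 \<or> y i = -1"
    and ubar_unit: "norm ubar = 1"
    and ubar_max: "\<forall>u. norm u = 1 \<longrightarrow> margin n (zvec x y) u \<le> margin n (zvec x y) ubar"
    and gamma_def: "\<gamma> = margin n (zvec x y) ubar"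
    and separable: "\<gamma> > 0"
    and assumption3: "span (zvec x y ` support_set n (zvec x y) ubar \<gamma>) = UNIV"
    and alpha_pos: "alpha_const n (zvec x y) ubar \<gamma> > 0"
    and w_side: "inner w ubar \<ge> 0"
    and w_far: "norm (proj_perp ubar w) > K_const L n (alpha_const n (zvec x y) ubar \<gamma>)"
  shows "inner (proj_perp ubar w) (risk_grad L n (zvec x y) w) \<ge> 0"
proof -
  define z where "z = zvec x y"
  define v where "v = proj_perp ubar w"
  define c where "c = inner w ubar"
  define r where "r = norm v"
  define \<alpha> where "\<alpha> = alpha_const n z ubar \<gamma>"
  define S where "S = support_set n z ubar \<gamma>"
  have uu: "inner ubar ubar = 1" using ubar_unit by (simp add: dot_square_norm)
  have vu: "inner v ubar = 0" unfolding v_def proj_perp_def by (simp add: inner_diff_left uu)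
  have wdec: "w = v + c *\<^sub>R ubar" unfolding v_def proj_perp_def c_def by simp
  have zb: "norm (z i) \<le> 1" if "i < n" for i
    using x_bdd y_sign that unfolding z_def zvec_def by auto
  have qge: "inner ubar (z i) \<ge> \<gamma>" if "i < n" for i
    unfolding gamma_def margin_def z_def using that by (intro Min_le) auto
  have Sne: "S \<noteq> {}"
  proof -
    have "\<gamma> \<in> (\<lambda>i. inner ubar (z i)) ` {..<n}"
      unfolding gamma_def margin_def z_def using n_pos by (intro Min_in) auto
    then obtain i where "i < n" "inner ubar (z i) = \<gamma>" by auto
    thus ?thesis unfolding S_def support_set_def by auto
  qed
  have Sfin: "finite S" unfolding S_def support_set_def by auto
  have Sn: "S \<subseteq> {..<n}" unfolding S_def support_set_def by auto
  have apos: "\<alpha> > 0" using alpha_pos unfolding \<alpha>_def z_def S_def .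
  have Kpos: "K_const L n \<alpha> \<ge> 0" using apos n_pos by (cases L) auto
  have rK: "r > K_const L n \<alpha>" using w_far unfolding r_def v_def \<alpha>_def z_def .
  hence rpos: "r > 0" using Kpos by linarith
  define \<xi> where "\<xi> = (- (1/r)) *\<^sub>R v"
  have xin: "norm \<xi> = 1" unfolding \<xi>_def r_def using rpos r_def by simp
  have xiu: "inner \<xi> ubar = 0" unfolding \<xi>_def using vu by simp
  have bdd: "bdd_below ((\<lambda>\<xi>. Max ((\<lambda>i. inner \<xi> (z i)) ` S)) ` {\<xi>. norm \<xi> = 1 \<and> inner \<xi> ubar = 0})"
  proof (rule bdd_belowI2[where m="-1"])
    fix e :: 'a assume e: "e \<in> {\<xi>. norm \<xi> = 1 \<and> inner \<xi> ubar = 0}"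
    obtain i where i: "i \<in> S" using Sne by auto
    have "-1 \<le> inner e (z i)"
    proof -
      have "\<bar>inner e (z i)\<bar> \<le> norm e * norm (z i)" by (rule Cauchy_Schwarz_ineq2)
      also have "\<dots> \<le> 1" using e zb[of i] i Sn by auto
      finally show ?thesis by linarith
    qed
    also have "\<dots> \<le> Max ((\<lambda>i. inner e (z i)) ` S)" using i Sfin by (intro Max_ge) auto
    finally show "-1 \<le> Max ((\<lambda>i. inner e (z i)) ` S)" .
  qed
  have "\<alpha> \<le> Max ((\<lambda>i. inner \<xi> (z i)) ` S)"
    unfolding \<alpha>_def alpha_const_def S_def[symmetric]
    by (rule cInf_lower[OF _ bdd]) (use xin xiu in auto)
  moreover have "Max ((\<lambda>i. inner \<xi> (z i)) ` S) \<in> (\<lambda>i. inner \<xi> (z i)) ` S"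
    using Sne Sfin by (intro Max_in) auto
  ultimately obtain k where kS: "k \<in> S" and kxi: "\<alpha> \<le> inner \<xi> (z k)" by auto
  have kn: "k < n" using kS Sn by auto
  have qk: "inner ubar (z k) = \<gamma>" using kS unfolding S_def support_set_def by auto
  define p where "p i = inner v (z i)" for i
  define a where "a i = inner w (z i)" for i
  have adec: "a i = p i + c * inner ubar (z i)" for i
    unfolding a_def p_def by (subst wdec) (simp add: inner_add_left)
  have pk: "p k \<le> - \<alpha> * r"
  proof -
    have "inner \<xi> (z k) = - p k / r" unfolding \<xi>_def p_def by simp
    with kxi have "\<alpha> \<le> - p k / r" by simp
    hence "\<alpha> * r \<le> (- p k / r) * r" using rpos by (intro mult_right_mono) auto
    hence "\<alpha> * r \<le> - p k" using rpos by simp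
    thus ?thesis by simp
  qed
  have cg: "c * \<gamma> \<ge> 0" using w_side separable c_def by simp
  define t where "t i = - ell' L (a i) * p i" for i
  define B where "B = exp (-(c*\<gamma>)) * exp (-1)"
  have tB: "t i \<le> B" if "i < n" for i
    unfolding t_def B_def
  proof (rule term_bound[OF _ cg])
    have "c * \<gamma> \<le> c * inner ubar (z i)" using qge[OF that] w_side c_def by (simp add: mult_left_mono)
    thus "p i + c * \<gamma> \<le> a i" using adec[of i] by simp
  qed
  have ak: "a k \<le> c * \<gamma> - \<alpha> * r" using adec[of k] qk pk by simp
  have main: "t k + real (n - 1) * B \<le> 0"
  proof (cases L)
    case ExpLoss
    have ar: "\<alpha> * r > 1 + ln (real n)" using rK apos ExpLoss by (simp add: divide_less_eq mult.commute)
    have ln0: "ln (real n) \<ge> 0" using n_pos by simp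
    have "exp (\<alpha> * r) \<ge> exp (1 + ln (real n))" using ar by simp
    hence ex: "exp (\<alpha> * r) \<ge> exp 1 * real n" using n_pos by (simp add: exp_add)
    have e1: "exp (1::real) \<ge> 1" by simp
    have "exp (\<alpha>*r) * (\<alpha>*r) \<ge> exp 1 * real n * 1" using ex ar ln0
      by (intro mult_mono) auto
    hence big: "exp (\<alpha>*r) * (\<alpha>*r) * exp 1 \<ge> real (n - 1)"
    proof -
      have "real (n - 1) \<le> real n" by simp
      also have "\<dots> \<le> exp 1 * real n" using mult_right_mono[OF e1, of "real n"] by simp
      also have "\<dots> \<le> exp (\<alpha>*r) * (\<alpha>*r)" using \<open>exp 1 * real n * 1 \<le> _\<close> by simp
      also have "\<dots> \<le> exp (\<alpha>*r) * (\<alpha>*r) * exp 1"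
        using mult_left_mono[OF e1, of "exp (\<alpha>*r) * (\<alpha>*r)"] ar ln0 by simp
      finally show ?thesis .
    qed
    have "t k = exp (- a k) * p k" unfolding t_def using ExpLoss by simp
    also have "\<dots> \<le> exp (- a k) * (- \<alpha> * r)" using pk by (intro mult_left_mono) auto
    also have "\<dots> \<le> exp (-(c*\<gamma>)) * exp (\<alpha>*r) * (- \<alpha> * r)"
    proof -
      have "exp (-(c*\<gamma>)) * exp (\<alpha>*r) = exp (-(c*\<gamma> - \<alpha>*r))" by (simp add: exp_add[symmetric])
      also have "\<dots> \<le> exp (- a k)" using ak by simp
      finally show ?thesis using apos rpos by (intro mult_right_mono_neg) auto
    qed
    finally have tk: "t k \<le> - exp (-(c*\<gamma>)) * (exp (\<alpha>*r) * (\<alpha> * r))" by simp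
    have "real (n - 1) * B = exp (-(c*\<gamma>)) * (real (n-1) * exp (-1))" unfolding B_def by simp
    also have "\<dots> \<le> exp (-(c*\<gamma>)) * (exp (\<alpha>*r) * (\<alpha> * r))"
    proof (rule mult_left_mono)
      have "real (n-1) * exp (-1) \<le> exp (\<alpha>*r) * (\<alpha>*r) * exp 1 * exp (-1)"
        using big by (intro mult_right_mono) auto
      also have "\<dots> = exp (\<alpha>*r) * (\<alpha>*r)" by (simp add: exp_minus)
      finally show "real (n-1) * exp (-1) \<le> exp (\<alpha>*r) * (\<alpha>*r)" .
    qed simp
    finally show ?thesis using tk by simp
  next
    case LogisticLoss
    have ar: "\<alpha> * r > 2 * real n / exp 1" using rK apos LogisticLoss
      by (simp add: divide_less_eq field_simps)
    define m where "m = exp (- a k)"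
    have "\<alpha> * r > 0" using apos rpos by simp
    hence "a k \<le> c * \<gamma>" using ak by linarith
    hence m0: "m \<ge> exp (-(c*\<gamma>))" unfolding m_def by simp
    have G: "m / (1 + m) \<ge> exp (-(c*\<gamma>)) / 2"
    proof -
      have "m / (1+m) \<ge> exp (-(c*\<gamma>)) / (1 + exp (-(c*\<gamma>)))"
      proof -
        define E where "E = exp (-(c*\<gamma>))"
        have Ep: "E > 0" unfolding E_def by simp
        have mp: "m > 0" unfolding m_def by simp
        have "E * (1 + m) \<le> m * (1 + E)" using m0 unfolding E_def[symmetric] by (simp add: algebra_simps)
        hence "E / (1 + E) \<le> m / (1 + m)" using Ep mp by (simp add: divide_simps add_pos_pos)
        thus ?thesis unfolding E_def .
      qed
      moreover have "exp (-(c*\<gamma>)) \<le> 1" using cg by simp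
      moreover have "exp (-(c*\<gamma>)) / 2 \<le> exp (-(c*\<gamma>)) / (1 + exp (-(c*\<gamma>)))"
        using \<open>exp (-(c*\<gamma>)) \<le> 1\<close> by (intro divide_left_mono) (auto simp: add_pos_pos)
      ultimately show ?thesis by linarith
    qed
    have "t k = m / (1 + m) * p k" unfolding t_def m_def using LogisticLoss by simp
    also have "\<dots> \<le> m / (1+m) * (- \<alpha> * r)" using pk m_def by (intro mult_left_mono) (auto simp: add_pos_pos)
    also have "\<dots> \<le> exp (-(c*\<gamma>)) / 2 * (- \<alpha> * r)" using G apos rpos by (intro mult_right_mono_neg) auto
    finally have tk: "t k \<le> - exp (-(c*\<gamma>)) * (\<alpha> * r / 2)" by simp
    have "real (n - 1) * B = exp (-(c*\<gamma>)) * (real (n-1) / exp 1)" unfolding B_def by (simp add: exp_minus field_simps)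
    also have "\<dots> \<le> exp (-(c*\<gamma>)) * (\<alpha> * r / 2)"
    proof (rule mult_left_mono)
      have "real (n-1) / exp 1 \<le> real n / exp 1" by (simp add: divide_right_mono)
      moreover have "2 * real n / exp 1 = 2 * (real n / exp 1)" by simp
      ultimately show "real (n-1) / exp 1 \<le> \<alpha> * r / 2" using ar by linarith
    qed simp
    finally show ?thesis using tk by simp
  qed
  have "(\<Sum>i<n. t i) = t k + (\<Sum>i\<in>{..<n} - {k}. t i)" using kn by (simp add: sum.remove)
  also have "(\<Sum>i\<in>{..<n} - {k}. t i) \<le> real (card ({..<n} - {k})) * B"
    using tB by (intro sum_bounded_above) auto
  also have "card ({..<n} - {k}) = n - 1" using kn by simp
  finally have sumt: "(\<Sum>i<n. t i) \<le> 0" using main by simp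
  have "inner v (risk_grad L n z w) = (1 / real n) * (\<Sum>i<n. ell' L (a i) * p i)"
    unfolding risk_grad_def a_def p_def by (simp add: inner_sum_right)
  also have "(\<Sum>i<n. ell' L (a i) * p i) = - (\<Sum>i<n. t i)"
    unfolding t_def by (simp add: sum_negf[symmetric])
  finally have "inner v (risk_grad L n z w) = - (\<Sum>i<n. t i) / real n" by simp
  moreover have "(\<Sum>i<n. t i) / real n \<le> 0" using sumt n_pos by (simp add: divide_nonpos_pos)
  ultimately have "inner v (risk_grad L n z w) \<ge> 0" by simp
  thus ?thesis unfolding v_def z_def .
qed

end
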